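(* Let $\eta>0$ and consider the network (NonAut-I-$\eta$) with species $\Lambda_1,\Lambda_2$ and reactions \[ 1:\ \eta\Lambda_1+\Lambda_2\to\emptyset,\qquad 2:\ \eta\Lambda_2+\Lambda_1\to\emptyset,\qquad \emptyset\to\Lambda_1,\qquad \emptyset\to\Lambda_2 \] (the last two being constant productions), with the associated ODEs \[ \begin{cases} [\dot\Lambda_1]=P_{\Lambda_1}-\eta\, r_1([\Lambda_1],[\Lambda_2])-r_2([\Lambda_2],[\Lambda_1]),\\ [\dot\Lambda_2]=P_{\Lambda_2}-r_1([\Lambda_1],[\Lambda_2])-\eta\, r_2([\Lambda_2],[\Lambda_1]), \end{cases} \] where $r_1,r_2$ are monotone chemical functions, under the kinetic symmetry constraints $r_1\equiv r_2\equiv r$ (as functions of their ordered arguments) and $P_{\Lambda_1}=P_{\Lambda_2}=P>0$. If $\eta\neq1$, the system has the capacity for zero-eigenvalue bifurcation and thus for differentiation, with bifurcation condition $\partial_1 r=\partial_2 r$ (partial derivatives of $r$ with respect to its first and second argument, evaluated at a homogeneous steady state $[\Lambda_1]=[\Lambda_2]$). The instability motif associated to a non-autocatalytic unstable-positive feedback which generates the necessary instability is the subnetwork with species $\{\Lambda_1,\Lambda_2\}$ and reactions $\{1:\ \eta\Lambda_1+\Lambda_2\to\dots,\ 2:\ \eta\Lambda_2+\Lambda_1\to\dots\}$.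
   Context: A rate function is monotone chemical if it is nonnegative, positive exactly when all its reactant concentrations are positive, independent of non-reactant concentrations, and has positive partial derivative in each reactant concentration at positive concentrations; kinetics are parameter-rich, so the partial derivatives at a positive steady state may be prescribed as arbitrary positive numbers. Capacity for zero-eigenvalue bifurcation means there are such admissible values at a homogeneous positive steady state for which the Jacobian is singular. For a network with stoichiometric matrix $S_{mj}$ (net production of species $m$ in reaction $j$), a $k$-Child-Selection triple consists of $k$ species $\kappa$, $k$ reactions $E_\kappa$ and a bijection $J:\kappa\to E_\kappa$ such that each species in $\kappa$ is a reactant of its assigned reaction; its CS-matrix is $S[\kappa]_{ml}=S_{m,J(X_l)}$. An unstable-positive feedback is a $k\times k$ CS-matrix with $\operatorname{sign}\det=(-1)^{k-1}$ and no proper principal $k'\times k'$ submatrix with determinant of sign $(-1)^{k'-1}$; it is non-autocatalytic if it is not Metzler (some off-diagonal entry negative). Its instability motif is the subnetwork consisting of the species $\kappa$ and reactions $E_\kappa$, disregarding other species. *)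

theory Defs
  imports "HOL-Analysis.Derivative" "Jordan_Normal_Form.Determinant"
begin

text \<open>A rate function of a reaction whose reactants are exactly two species, written as a
function of the two reactant concentrations (so it is automatically independent of
non-reactant concentrations).\<close>

definition monotone_chemical2 :: "(real \<Rightarrow> real \<Rightarrow> real) \<Rightarrow> bool" where
  "monotone_chemical2 r \<longleftrightarrow>
     (\<forall>x y. x \<ge> 0 \<longrightarrow> y \<ge> 0 \<longrightarrow> r x y \<ge> 0) \<and>
     (\<forall>x y. x \<ge> 0 \<longrightarrow> y \<ge> 0 \<longrightarrow> (r x y > 0 \<longleftrightarrow> x > 0 \<and> y > 0)) \<and>
     (\<forall>x y. x > 0 \<longrightarrow> y > 0 \<longrightarrow> (\<exists>d > 0. ((\<lambda>t. r t y) has_real_derivative d) (at x))) \<and>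
     (\<forall>x y. x > 0 \<longrightarrow> y > 0 \<longrightarrow> (\<exists>d > 0. ((\<lambda>t. r x t) has_real_derivative d) (at y)))"

definition partial1 :: "(real \<Rightarrow> real \<Rightarrow> real) \<Rightarrow> real \<Rightarrow> real \<Rightarrow> real" where
  "partial1 r x y = deriv (\<lambda>t. r t y) x"

definition partial2 :: "(real \<Rightarrow> real \<Rightarrow> real) \<Rightarrow> real \<Rightarrow> real \<Rightarrow> real" where
  "partial2 r x y = deriv (\<lambda>t. r x t) y"

datatype species = L1 | L2
datatype reaction = R1 | R2 | Prod1 | Prod2

fun nonaut_stoich :: "real \<Rightarrow> species \<Rightarrow> reaction \<Rightarrow> real" where
  "nonaut_stoich \<eta> L1 R1 = - \<eta>"
| "nonaut_stoich \<eta> L2 R1 = - 1"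
| "nonaut_stoich \<eta> L1 R2 = - 1"
| "nonaut_stoich \<eta> L2 R2 = - \<eta>"
| "nonaut_stoich \<eta> L1 Prod1 = 1"
| "nonaut_stoich \<eta> L2 Prod1 = 0"
| "nonaut_stoich \<eta> L1 Prod2 = 0"
| "nonaut_stoich \<eta> L2 Prod2 = 1"

fun nonaut_reactant :: "species \<Rightarrow> reaction \<Rightarrow> bool" where
  "nonaut_reactant _ R1 = True"
| "nonaut_reactant _ R2 = True"
| "nonaut_reactant _ Prod1 = False"
| "nonaut_reactant _ Prod2 = False"

text \<open>Vector field of the ODE under the symmetry constraints r1 = r2 = r, P_L1 = P_L2 = P:
  d[L1]/dt = P - eta r([L1],[L2]) - r([L2],[L1]),  d[L2]/dt = P - r([L1],[L2]) - eta r([L2],[L1]).\<close>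
fun nonaut_field :: "real \<Rightarrow> real \<Rightarrow> (real \<Rightarrow> real \<Rightarrow> real) \<Rightarrow> (species \<Rightarrow> real) \<Rightarrow> species \<Rightarrow> real" where
  "nonaut_field \<eta> P r x L1 = P - \<eta> * r (x L1) (x L2) - r (x L2) (x L1)"
| "nonaut_field \<eta> P r x L2 = P - r (x L1) (x L2) - \<eta> * r (x L2) (x L1)"

fun sp :: "nat \<Rightarrow> species" where
  "sp 0 = L1"
| "sp _ = L2"

definition jacobian2 :: "((species \<Rightarrow> real) \<Rightarrow> species \<Rightarrow> real) \<Rightarrow> (species \<Rightarrow> real) \<Rightarrow> real mat" where
  "jacobian2 F x = mat 2 2 (\<lambda>(i, j). deriv (\<lambda>t. F (x(sp j := t)) (sp i)) (x (sp j)))"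

text \<open>Capacity for zero-eigenvalue bifurcation: for some admissible (monotone chemical) kinetics
  and some P > 0 there is a homogeneous positive steady state at which the Jacobian is singular.\<close>
definition nonaut_zero_eig_capacity :: "real \<Rightarrow> bool" where
  "nonaut_zero_eig_capacity \<eta> \<longleftrightarrow>
     (\<exists>r P c. monotone_chemical2 r \<and> P > 0 \<and> c > 0 \<and>
        (\<forall>m. nonaut_field \<eta> P r (\<lambda>_. c) m = 0) \<and>
        det (jacobian2 (nonaut_field \<eta> P r) (\<lambda>_. c)) = 0)"

text \<open>A k-CS triple: species list ks (kappa, ks!l = X_l), reaction list js with js!l = J(X_l).\<close>
definition CS_triple :: "('s \<Rightarrow> 'j \<Rightarrow> bool) \<Rightarrow> 's list \<Rightarrow> 'j list \<Rightarrow> bool" where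
  "CS_triple reac ks js \<longleftrightarrow> distinct ks \<and> distinct js \<and> length ks = length js \<and>
     (\<forall>l < length ks. reac (ks ! l) (js ! l))"

definition CS_matrix :: "('s \<Rightarrow> 'j \<Rightarrow> real) \<Rightarrow> 's list \<Rightarrow> 'j list \<Rightarrow> real mat" where
  "CS_matrix S ks js = mat (length ks) (length ks) (\<lambda>(m, l). S (ks ! m) (js ! l))"

definition principal_submatrix :: "'a mat \<Rightarrow> nat set \<Rightarrow> 'a mat" where
  "principal_submatrix A I = mat (card I) (card I)
     (\<lambda>(a, b). A $$ (sorted_list_of_set I ! a, sorted_list_of_set I ! b))"

definition unstable_positive_feedback :: "real mat \<Rightarrow> bool" where
  "unstable_positive_feedback A \<longleftrightarrow>
     (\<exists>k \<ge> 1. A \<in> carrier_mat k k \<and>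
        sgn (det A) = (-1) ^ (k - 1) \<and>
        (\<forall>I. I \<subset> {0..<k} \<and> I \<noteq> {} \<longrightarrow>
            sgn (det (principal_submatrix A I)) \<noteq> (-1) ^ (card I - 1)))"

definition Metzler :: "real mat \<Rightarrow> bool" where
  "Metzler A \<longleftrightarrow> (\<forall>i j. i < dim_row A \<longrightarrow> j < dim_col A \<longrightarrow> i \<noteq> j \<longrightarrow> A $$ (i, j) \<ge> 0)"

definition non_autocatalytic :: "real mat \<Rightarrow> bool" where
  "non_autocatalytic A \<longleftrightarrow> \<not> Metzler A"

end

theory Submission
  imports Defs
begin

lemma det2: "det (mat 2 2 f :: real mat) = f (0,0) * f (1,1) - f (0,1) * f (1,0)"
proof -
  have "det (mat 2 2 f :: real mat) = (\<Sum>i<2. (mat 2 2 f) $$ (i,0) * cofactor (mat 2 2 f) i 0)"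
    by (rule laplace_expansion_column) auto
  also have "\<dots> = f (0,0) * f (1,1) - f (0,1) * f (1,0)"
    by (simp add: cofactor_def numeral_2_eq_2 det_single mat_delete_def)
  finally show ?thesis .
qed

lemma det1: "det (mat 1 1 f :: real mat) = f (0,0)"
  by (simp add: det_single)

lemma jac_det:
  assumes d1: "((\<lambda>t. r t c) has_real_derivative a) (at c)"
    and d2: "((\<lambda>t. r c t) has_real_derivative b) (at c)"
  shows "det (jacobian2 (nonaut_field \<eta> P r) (\<lambda>_. c)) =
     (\<eta> * a + b) * (b + \<eta> * a) - (\<eta> * b + a) * (a + \<eta> * b)"
proof -
  let ?J = "jacobian2 (nonaut_field \<eta> P r) (\<lambda>_. c)"
  have e00: "?J $$ (0,0) = - (\<eta> * a + b)"
    unfolding jacobian2_def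
    by (simp, rule DERIV_imp_deriv, auto intro!: derivative_eq_intros d1 d2)
  have e01: "?J $$ (0,1) = - (\<eta> * b + a)"
    unfolding jacobian2_def
    by (simp, rule DERIV_imp_deriv, auto intro!: derivative_eq_intros d1 d2)
  have e10: "?J $$ (1,0) = - (a + \<eta> * b)"
    unfolding jacobian2_def
    by (simp, rule DERIV_imp_deriv, auto intro!: derivative_eq_intros d1 d2)
  have e11: "?J $$ (1,1) = - (b + \<eta> * a)"
    unfolding jacobian2_def
    by (simp, rule DERIV_imp_deriv, auto intro!: derivative_eq_intros d1 d2)
  have J: "?J = mat 2 2 (\<lambda>(i,j). ?J $$ (i,j))"
    by (rule eq_matI) (auto simp: jacobian2_def)
  have "det ?J = ?J $$ (0,0) * ?J $$ (1,1) - ?J $$ (0,1) * ?J $$ (1,0)"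
    by (subst J, subst det2, simp only: prod.case)
  then show ?thesis unfolding e00 e01 e10 e11 by (simp add: algebra_simps)
qed

lemma subsets2: assumes "I \<subset> {0..<(2::nat)}" "I \<noteq> {}" shows "I = {0} \<or> I = {1}"
proof -
  have sub: "I \<subseteq> {0,1}" using assms(1) by auto
  have "\<not> (0 \<in> I \<and> 1 \<in> I)"
  proof
    assume "0 \<in> I \<and> 1 \<in> I"
    then have "{0..<2} \<subseteq> I" by (auto simp: less_2_cases_iff)
    then show False using assms(1) by auto
  qed
  moreover obtain x where "x \<in> I" using assms(2) by auto
  ultimately show ?thesis using sub by blast
qed

lemma psub1: "i < 2 \<Longrightarrow> det (principal_submatrix (mat 2 2 f) {i}) = (f (i,i) :: real)"
  unfolding principal_submatrix_def by (simp add: det_single)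

lemma upf2:
  assumes "f (0,0) < (0::real)" "f (1,1) < 0" "f (0,0) * f (1,1) - f (0,1) * f (1,0) < 0"
  shows "unstable_positive_feedback (mat 2 2 f)"
  unfolding unstable_positive_feedback_def
proof (intro exI[of _ 2] conjI allI impI)
  have "det (mat 2 2 f) < 0" using assms(3) by (simp only: det2)
  then show "sgn (det (mat 2 2 f)) = (-1) ^ (2 - 1)" by simp
next
  fix I :: "nat set" assume "I \<subset> {0..<2} \<and> I \<noteq> {}"
  then have "I = {0} \<or> I = {1}" by (intro subsets2) auto
  then show "sgn (det (principal_submatrix (mat 2 2 f) I)) \<noteq> (-1) ^ (card I - 1)"
  proof
    assume "I = {0}" then show ?thesis using assms(1) psub1[of 0 f] by simp
  next
    assume "I = {1}" then show ?thesis using assms(2) psub1[of 1 f] by simp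
  qed
next
  show "mat 2 2 f \<in> carrier_mat 2 2" by simp
qed simp

theorem proposition4p3:
  fixes \<eta> :: real
  assumes "\<eta> > 0" and "\<eta> \<noteq> 1"
  shows "nonaut_zero_eig_capacity \<eta>
    \<and> (\<forall>r P c. monotone_chemical2 r \<longrightarrow> P > 0 \<longrightarrow> c > 0 \<longrightarrow>
          (\<forall>m. nonaut_field \<eta> P r (\<lambda>_. c) m = 0) \<longrightarrow>
          (det (jacobian2 (nonaut_field \<eta> P r) (\<lambda>_. c)) = 0 \<longleftrightarrow> partial1 r c c = partial2 r c c))
    \<and> (\<exists>ks js. CS_triple nonaut_reactant ks js
          \<and> unstable_positive_feedback (CS_matrix (nonaut_stoich \<eta>) ks js)
          \<and> non_autocatalytic (CS_matrix (nonaut_stoich \<eta>) ks js)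
          \<and> set ks = {L1, L2} \<and> set js = {R1, R2})"
proof (intro conjI)
  define r :: "real \<Rightarrow> real \<Rightarrow> real" where "r = (\<lambda>x y. x * y)"
  have mc: "monotone_chemical2 r"
    unfolding monotone_chemical2_def r_def
  proof (intro conjI allI impI)
    fix x y :: real
    assume "x > 0" "y > 0"
    show "\<exists>d>0. ((\<lambda>t. t * y) has_real_derivative d) (at x)"
      using \<open>y > 0\<close> by (intro exI[of _ y]) (auto intro!: derivative_eq_intros)
    show "\<exists>d>0. ((\<lambda>t. x * t) has_real_derivative d) (at y)"
      using \<open>x > 0\<close> by (intro exI[of _ x]) (auto intro!: derivative_eq_intros)
  qed (auto simp: zero_less_mult_iff)
  have d1: "((\<lambda>t. r t 1) has_real_derivative 1) (at 1)"
    unfolding r_def by (auto intro!: derivative_eq_intros)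
  have d2: "((\<lambda>t. r 1 t) has_real_derivative 1) (at 1)"
    unfolding r_def by (auto intro!: derivative_eq_intros)
  have ss: "\<forall>m. nonaut_field \<eta> (\<eta> + 1) r (\<lambda>_. 1) m = 0"
  proof
    fix m show "nonaut_field \<eta> (\<eta> + 1) r (\<lambda>_. 1) m = 0"
      by (cases m) (auto simp: r_def)
  qed
  show "nonaut_zero_eig_capacity \<eta>"
    unfolding nonaut_zero_eig_capacity_def
    using mc ss jac_det[OF d1 d2, of \<eta> "\<eta> + 1"] assms
    by (intro exI[of _ r] exI[of _ "\<eta> + 1"] exI[of _ 1]) (auto simp: algebra_simps)
next
  show "\<forall>r P c. monotone_chemical2 r \<longrightarrow> P > 0 \<longrightarrow> c > 0 \<longrightarrow>
          (\<forall>m. nonaut_field \<eta> P r (\<lambda>_. c) m = 0) \<longrightarrow>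
          (det (jacobian2 (nonaut_field \<eta> P r) (\<lambda>_. c)) = 0 \<longleftrightarrow> partial1 r c c = partial2 r c c)"
  proof (intro allI impI)
    fix r P c
    assume mc: "monotone_chemical2 r" and "P > (0::real)" and c: "c > (0::real)"
    obtain a where a: "a > 0" "((\<lambda>t. r t c) has_real_derivative a) (at c)"
      using mc c unfolding monotone_chemical2_def by blast
    obtain b where b: "b > 0" "((\<lambda>t. r c t) has_real_derivative b) (at c)"
      using mc c unfolding monotone_chemical2_def by blast
    have p1: "partial1 r c c = a" unfolding partial1_def using a(2) by (rule DERIV_imp_deriv)
    have p2: "partial2 r c c = b" unfolding partial2_def using b(2) by (rule DERIV_imp_deriv)
    have eq: "(\<eta> * a + b) * (b + \<eta> * a) - (\<eta> * b + a) * (a + \<eta> * b)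
        = (\<eta> - 1) * (\<eta> + 1) * (a + b) * (a - b)"
      by (simp add: algebra_simps power2_eq_square)
    have nz: "(\<eta> - 1) * (\<eta> + 1) * (a + b) \<noteq> 0"
      using assms a b by auto
    show "det (jacobian2 (nonaut_field \<eta> P r) (\<lambda>_. c)) = 0 \<longleftrightarrow> partial1 r c c = partial2 r c c"
      unfolding jac_det[OF a(2) b(2)] eq p1 p2 using nz by auto
  qed
next
  show "\<exists>ks js. CS_triple nonaut_reactant ks js
          \<and> unstable_positive_feedback (CS_matrix (nonaut_stoich \<eta>) ks js)
          \<and> non_autocatalytic (CS_matrix (nonaut_stoich \<eta>) ks js)
          \<and> set ks = {L1, L2} \<and> set js = {R1, R2}"
  proof (cases "\<eta> < 1")
    case True
    let ?ks = "[L1, L2]" and ?js = "[R1, R2]"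
    have cm: "CS_matrix (nonaut_stoich \<eta>) ?ks ?js = mat 2 2 (\<lambda>(m, l). nonaut_stoich \<eta> (?ks ! m) (?js ! l))"
      by (simp add: CS_matrix_def numeral_2_eq_2)
    have "\<eta> * \<eta> < 1 * 1" using True assms by (intro mult_strict_mono) auto
    then have "unstable_positive_feedback (CS_matrix (nonaut_stoich \<eta>) ?ks ?js)"
      unfolding cm using True assms by (intro upf2) auto
    moreover have "non_autocatalytic (CS_matrix (nonaut_stoich \<eta>) ?ks ?js)"
      unfolding cm non_autocatalytic_def Metzler_def
      by (simp add: less_2_cases_iff) blast
    moreover have "CS_triple nonaut_reactant ?ks ?js"
      unfolding CS_triple_def by (auto simp: less_Suc_eq)
    ultimately show ?thesis by (intro exI[of _ ?ks] exI[of _ ?js]) auto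
  next
    case False
    then have gt: "\<eta> > 1" using assms by auto
    let ?ks = "[L1, L2]" and ?js = "[R2, R1]"
    have cm: "CS_matrix (nonaut_stoich \<eta>) ?ks ?js = mat 2 2 (\<lambda>(m, l). nonaut_stoich \<eta> (?ks ! m) (?js ! l))"
      by (simp add: CS_matrix_def numeral_2_eq_2)
    have "\<eta> * \<eta> > 1 * 1" using gt by (intro mult_strict_mono) auto
    then have "unstable_positive_feedback (CS_matrix (nonaut_stoich \<eta>) ?ks ?js)"
      unfolding cm using gt assms by (intro upf2) auto
    moreover have "non_autocatalytic (CS_matrix (nonaut_stoich \<eta>) ?ks ?js)"
      unfolding cm non_autocatalytic_def Metzler_def using assms
      by (simp add: less_2_cases_iff) blast
    moreover have "CS_triple nonaut_reactant ?ks ?js"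
      unfolding CS_triple_def by (auto simp: less_Suc_eq)
    ultimately show ?thesis by (intro exI[of _ ?ks] exI[of _ ?js]) auto
  qed
qed

end
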